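(* With the notation below, after separating the $\nu$ null directions of $\mathcal L$, $$\sum_{a\in G_K^m}\exp\bigl(2\pi i\,Q_{\mathcal L,K}(a)\bigr)=|G_K|^{\nu}\sum_{[y]\in G_K^{\rho}}\exp\!\bigl(\pi i\,y^\top(\mathcal L_{\mathrm{reg}}\otimes K^{-1})y\bigr).$$
   Context: $K\in M_n(\mathbb Z)$ is symmetric, nondegenerate and even; $G_K=\mathbb Z^n/K\mathbb Z^n$. $\mathcal L\in M_m(\mathbb Z)$ is a symmetric integer matrix (the linking matrix of a framed link) with rank $\rho$ and nullity $\nu=m-\rho$; $U\in GL_m(\mathbb Z)$ with $U^\top\mathcal LU=\mathrm{diag}(\mathcal L_{\mathrm{reg}},0)$, $\mathcal L_{\mathrm{reg}}\in M_\rho(\mathbb Z)$ nondegenerate. For $a\in G_K^m$ with integer lifts $x=(x_1,\dots,x_m)$, $Q_{\mathcal L,K}(a)\equiv\frac12x^\top(\mathcal L\otimes K^{-1})x\pmod1$; the summand on the right is evaluated at integer lifts of $y$. *)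

theory Defs
  imports "Jordan_Normal_Form.Gauss_Jordan_Elimination" "Jordan_Normal_Form.Determinant"
    Complex_Main
begin

definition kron :: "'a::times mat \<Rightarrow> 'a mat \<Rightarrow> 'a mat" where
  "kron A B = mat (dim_row A * dim_row B) (dim_col A * dim_col B)
     (\<lambda>(i,j). A $$ (i div dim_row B, j div dim_col B) * B $$ (i mod dim_row B, j mod dim_col B))"

definition inv_real :: "int mat \<Rightarrow> real mat" where
  "inv_real K = the (mat_inverse (map_mat real_of_int K))"

definition even_mat :: "int mat \<Rightarrow> bool" where
  "even_mat K \<longleftrightarrow> (\<forall>i < dim_row K. even (K $$ (i,i)))"

(* the discriminant group G_K = Z^n / K Z^n, as a set of cosets *)
definition lat_rel :: "int mat \<Rightarrow> (int vec \<times> int vec) set" where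
  "lat_rel K = {(x,y). x \<in> carrier_vec (dim_row K) \<and> y \<in> carrier_vec (dim_row K) \<and>
      (\<exists>z \<in> carrier_vec (dim_col K). x - y = K *\<^sub>v z)}"

definition GK :: "int mat \<Rightarrow> int vec set set" where
  "GK K = carrier_vec (dim_row K) // lat_rel K"

definition GKpow :: "int mat \<Rightarrow> nat \<Rightarrow> (nat \<Rightarrow> int vec set) set" where
  "GKpow K k = PiE {..<k} (\<lambda>_. GK K)"

definition lift :: "int mat \<Rightarrow> nat \<Rightarrow> (nat \<Rightarrow> int vec set) \<Rightarrow> int vec" where
  "lift K k a = (let n = dim_row K in
     vec (k * n) (\<lambda>t. (SOME v. v \<in> a (t div n)) $ (t mod n)))"

definition qform :: "real mat \<Rightarrow> int vec \<Rightarrow> real" where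
  "qform M x = (let xr = map_vec real_of_int x in xr \<bullet> (M *\<^sub>v xr))"

(* Q_{L,K}(a) = 1/2 x^T (L \<otimes> K^{-1}) x  (real representative; mod 1 irrelevant under exp) *)
definition QLK :: "int mat \<Rightarrow> int mat \<Rightarrow> (nat \<Rightarrow> int vec set) \<Rightarrow> real" where
  "QLK L K a = 1/2 * qform (kron (map_mat real_of_int L) (inv_real K)) (lift K (dim_row L) a)"

end

theory Submission
  imports Defs
begin

lemma sum_split_mult: "(\<Sum>t<(k::nat)*n. f t) = (\<Sum>i<k. \<Sum>p<n. f (i*n+p))"
proof (induction k)
  case 0 then show ?case by simp
next
  case (Suc k)
  have "(\<Sum>t<Suc k*n. f t) = (\<Sum>t\<in>{0..<k*n}. f t) + (\<Sum>t\<in>{k*n..<k*n+n}. f t)"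
    using sum.atLeastLessThan_concat[of 0 "k*n" "k*n+n" f]
    by (simp add: lessThan_atLeast0 add.commute)
  also have "(\<Sum>t\<in>{k*n..<k*n+n}. f t) = (\<Sum>p<n. f (k*n+p))"
    using sum.shift_bounds_nat_ivl[of f 0 "k*n" n] by (simp add: lessThan_atLeast0 add.commute)
  finally show ?case using Suc by (simp add: lessThan_atLeast0)
qed

definition Bf :: "real mat \<Rightarrow> nat \<Rightarrow> (nat \<Rightarrow> real) \<Rightarrow> (nat \<Rightarrow> real) \<Rightarrow> real" where
  "Bf Ki n f g = (\<Sum>p<n. \<Sum>q<n. f p * Ki $$ (p,q) * g q)"

lemma qform_kron:
  assumes L: "Lr \<in> carrier_mat k k" and Ki: "Ki \<in> carrier_mat n n"
  shows "qform (kron Lr Ki) (vec (k*n) (\<lambda>t. x (t div n) $ (t mod n))) =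
    (\<Sum>i<k. \<Sum>j<k. Lr $$ (i,j) * Bf Ki n (\<lambda>p. real_of_int (x i $ p)) (\<lambda>q. real_of_int (x j $ q)))"
proof -
  have "qform (kron Lr Ki) (vec (k*n) (\<lambda>t. x (t div n) $ (t mod n))) =
    (\<Sum>t<k*n. real_of_int (x (t div n) $ (t mod n)) * (\<Sum>s<k*n.
        Lr $$ (t div n, s div n) * Ki $$ (t mod n, s mod n) * real_of_int (x (s div n) $ (s mod n))))"
    using L Ki unfolding qform_def Let_def kron_def
    by (auto simp: scalar_prod_def lessThan_atLeast0 intro!: sum.cong)
  also have "\<dots> = (\<Sum>i<k. \<Sum>p<n. real_of_int (x i $ p) * (\<Sum>j<k. \<Sum>q<n.
        Lr $$ (i, j) * Ki $$ (p, q) * real_of_int (x j $ q)))"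
    by (simp add: sum_split_mult)
  also have "\<dots> = (\<Sum>i<k. \<Sum>j<k. Lr $$ (i,j) * Bf Ki n (\<lambda>p. real_of_int (x i $ p)) (\<lambda>q. real_of_int (x j $ q)))"
  proof (rule sum.cong[OF refl])
    fix i assume "i \<in> {..<k}"
    have "(\<Sum>p<n. real_of_int (x i $ p) * (\<Sum>j<k. \<Sum>q<n.
        Lr $$ (i, j) * Ki $$ (p, q) * real_of_int (x j $ q))) =
      (\<Sum>p<n. \<Sum>j<k. \<Sum>q<n. Lr $$ (i, j) * (real_of_int (x i $ p) * Ki $$ (p, q) * real_of_int (x j $ q)))"
      by (simp add: sum_distrib_left mult_ac)
    also have "\<dots> = (\<Sum>j<k. \<Sum>p<n. \<Sum>q<n. Lr $$ (i, j) * (real_of_int (x i $ p) * Ki $$ (p, q) * real_of_int (x j $ q)))"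
      by (rule sum.swap)
    also have "\<dots> = (\<Sum>j<k. Lr $$ (i,j) * Bf Ki n (\<lambda>p. real_of_int (x i $ p)) (\<lambda>q. real_of_int (x j $ q)))"
      by (simp add: Bf_def sum_distrib_left)
    finally show "(\<Sum>p<n. real_of_int (x i $ p) * (\<Sum>j<k. \<Sum>q<n.
        Lr $$ (i, j) * Ki $$ (p, q) * real_of_int (x j $ q))) = (\<Sum>j<k. Lr $$ (i,j) * Bf Ki n (\<lambda>p. real_of_int (x i $ p)) (\<lambda>q. real_of_int (x j $ q)))" .
  qed
  finally show ?thesis .
qed


lemma lat_rel_iff:
  assumes K: "K \<in> carrier_mat n n"
  shows "(x,y) \<in> lat_rel K \<longleftrightarrow> x \<in> carrier_vec n \<and> y \<in> carrier_vec n \<and>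
     (\<exists>z. \<forall>p<n. x$p - y$p = (\<Sum>r<n. K$$(p,r) * z r))"
proof
  assume "(x,y) \<in> lat_rel K"
  then obtain z where x: "x \<in> carrier_vec n" and y: "y \<in> carrier_vec n" and z: "z \<in> carrier_vec n"
    and e: "x - y = K *\<^sub>v z" using K unfolding lat_rel_def by auto
  have "\<forall>p<n. x$p - y$p = (\<Sum>r<n. K$$(p,r) * z $ r)"
  proof (intro allI impI)
    fix p assume p: "p < n"
    have "x$p - y$p = (x - y) $ p" using p x y by simp
    also have "\<dots> = (\<Sum>r<n. K$$(p,r) * z $ r)" unfolding e using p K z
      by (simp add: scalar_prod_def lessThan_atLeast0)
    finally show "x$p - y$p = (\<Sum>r<n. K$$(p,r) * z $ r)" .
  qed
  then show "x \<in> carrier_vec n \<and> y \<in> carrier_vec n \<and>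
     (\<exists>z. \<forall>p<n. x$p - y$p = (\<Sum>r<n. K$$(p,r) * z r))" using x y by blast
next
  assume "x \<in> carrier_vec n \<and> y \<in> carrier_vec n \<and>
     (\<exists>z. \<forall>p<n. x$p - y$p = (\<Sum>r<n. K$$(p,r) * z r))"
  then obtain z where x: "x \<in> carrier_vec n" and y: "y \<in> carrier_vec n"
    and z: "\<forall>p<n. x$p - y$p = (\<Sum>r<n. K$$(p,r) * z r)" by blast
  have "x - y = K *\<^sub>v vec n z"
    using x y K z by (auto simp: scalar_prod_def lessThan_atLeast0 intro!: eq_vecI)
  then show "(x,y) \<in> lat_rel K" using x y K unfolding lat_rel_def by auto
qed

lemma lat_rel_equiv:
  assumes K: "K \<in> carrier_mat n n"
  shows "equiv (carrier_vec n) (lat_rel K)"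
proof (rule equivI)
  show "lat_rel K \<subseteq> carrier_vec n \<times> carrier_vec n" using lat_rel_iff[OF K] by auto
  show "refl_on (carrier_vec n) (lat_rel K)"
  proof (rule refl_onI)
    fix x :: "int vec" assume "x \<in> carrier_vec n"
    then show "(x,x) \<in> lat_rel K" unfolding lat_rel_iff[OF K] by (intro conjI exI[of _ "\<lambda>_. 0"]) auto
  qed
  show "sym (lat_rel K)"
  proof (rule symI)
    fix x y :: "int vec" assume "(x,y) \<in> lat_rel K"
    then obtain z where "x \<in> carrier_vec n" "y \<in> carrier_vec n" "\<forall>p<n. x$p - y$p = (\<Sum>r<n. K$$(p,r) * z r)"
      unfolding lat_rel_iff[OF K] by blast
    note h = this
    have "\<forall>p<n. y$p - x$p = (\<Sum>r<n. K$$(p,r) * (- z r))"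
    proof (intro allI impI)
      fix p assume "p < n"
      then have "x$p - y$p = (\<Sum>r<n. K$$(p,r) * z r)" using h by blast
      then show "y$p - x$p = (\<Sum>r<n. K$$(p,r) * (- z r))" by (simp add: sum_negf)
    qed
    then have ex: "\<exists>z. \<forall>p<n. y$p - x$p = (\<Sum>r<n. K$$(p,r) * z r)" by (rule exI[where x="\<lambda>r. - z r"])
    show "(y,x) \<in> lat_rel K" unfolding lat_rel_iff[OF K] using h(1) h(2) ex by (intro conjI)
  qed
  show "trans (lat_rel K)"
  proof (rule transI)
    fix x y w :: "int vec" assume a1: "(x,y) \<in> lat_rel K" and a2: "(y,w) \<in> lat_rel K"
    from a1 obtain z1 where h1: "x \<in> carrier_vec n" "y \<in> carrier_vec n"
      "\<forall>p<n. x$p - y$p = (\<Sum>r<n. K$$(p,r) * z1 r)"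
      unfolding lat_rel_iff[OF K] by blast
    from a2 obtain z2 where h2: "w \<in> carrier_vec n"
      "\<forall>p<n. y$p - w$p = (\<Sum>r<n. K$$(p,r) * z2 r)"
      unfolding lat_rel_iff[OF K] by blast
    note h = h1 h2
    have "\<forall>p<n. x$p - w$p = (\<Sum>r<n. K$$(p,r) * (z1 r + z2 r))"
    proof (intro allI impI)
      fix p assume "p < n"
      then have "x$p - y$p = (\<Sum>r<n. K$$(p,r) * z1 r)" "y$p - w$p = (\<Sum>r<n. K$$(p,r) * z2 r)" using h by blast+
      then have "x$p - w$p = (\<Sum>r<n. K$$(p,r) * z1 r) + (\<Sum>r<n. K$$(p,r) * z2 r)" by linarith
      then show "x$p - w$p = (\<Sum>r<n. K$$(p,r) * (z1 r + z2 r))" by (simp add: distrib_left sum.distrib)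
    qed
    then have ex: "\<exists>z. \<forall>p<n. x$p - w$p = (\<Sum>r<n. K$$(p,r) * z r)" by (rule exI[where x="\<lambda>r. z1 r + z2 r"])
    show "(x,w) \<in> lat_rel K" unfolding lat_rel_iff[OF K] using h1(1) h2(1) ex by (intro conjI)
  qed
qed

lemma even_sym_sum:
  fixes s :: "nat \<Rightarrow> nat \<Rightarrow> int"
  assumes "\<And>i j. i < m \<Longrightarrow> j < m \<Longrightarrow> s i j = s j i" "\<And>i. i < m \<Longrightarrow> even (s i i)"
  shows "even (\<Sum>i<m. \<Sum>j<m. s i j)"
  using assms
proof (induction m)
  case 0 then show ?case by simp
next
  case (Suc m)
  have IH: "even (\<Sum>i<m. \<Sum>j<m. s i j)" using Suc by auto
  have sw: "(\<Sum>i<m. s i m) = (\<Sum>j<m. s m j)" using Suc.prems(1) by (intro sum.cong) auto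
  have "(\<Sum>i<Suc m. \<Sum>j<Suc m. s i j) = (\<Sum>i<m. \<Sum>j<m. s i j) + 2 * (\<Sum>j<m. s m j) + s m m"
    using sw by (simp add: sum.distrib)
  note eq = this
  have "even (s m m)" using Suc.prems(2)[of m] by simp
  then show ?case unfolding eq using IH by simp
qed

lemma Bf_add_left: "Bf Ki n (\<lambda>p. f1 p + f2 p) g = Bf Ki n f1 g + Bf Ki n f2 g"
  unfolding Bf_def by (simp add: distrib_right sum.distrib)
lemma Bf_add_right: "Bf Ki n f (\<lambda>p. g1 p + g2 p) = Bf Ki n f g1 + Bf Ki n f g2"
  unfolding Bf_def by (simp add: distrib_left sum.distrib)
lemma Bf_sum_left: "Bf Ki n (\<lambda>p. \<Sum>j\<in>J. c j * f j p) g = (\<Sum>j\<in>J. c j * Bf Ki n (f j) g)"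
proof -
  have "Bf Ki n (\<lambda>p. \<Sum>j\<in>J. c j * f j p) g = (\<Sum>p<n. \<Sum>q<n. \<Sum>j\<in>J. c j * (f j p * Ki$$(p,q) * g q))"
    unfolding Bf_def by (simp add: sum_distrib_right mult.assoc)
  also have "\<dots> = (\<Sum>p<n. \<Sum>j\<in>J. \<Sum>q<n. c j * (f j p * Ki$$(p,q) * g q))"
    by (rule sum.cong[OF refl], rule sum.swap)
  also have "\<dots> = (\<Sum>j\<in>J. \<Sum>p<n. \<Sum>q<n. c j * (f j p * Ki$$(p,q) * g q))"
    by (rule sum.swap)
  also have "\<dots> = (\<Sum>j\<in>J. c j * Bf Ki n (f j) g)"
    by (simp add: Bf_def sum_distrib_left)
  finally show ?thesis .
qed

lemma Bf_sum_right: "Bf Ki n f (\<lambda>p. \<Sum>j\<in>J. c j * g j p) = (\<Sum>j\<in>J. c j * Bf Ki n f (g j))"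
proof -
  have "Bf Ki n f (\<lambda>p. \<Sum>j\<in>J. c j * g j p) = (\<Sum>p<n. \<Sum>q<n. \<Sum>j\<in>J. c j * (f p * Ki$$(p,q) * g j q))"
    unfolding Bf_def by (simp add: sum_distrib_left mult_ac)
  also have "\<dots> = (\<Sum>p<n. \<Sum>j\<in>J. \<Sum>q<n. c j * (f p * Ki$$(p,q) * g j q))"
    by (rule sum.cong[OF refl], rule sum.swap)
  also have "\<dots> = (\<Sum>j\<in>J. \<Sum>p<n. \<Sum>q<n. c j * (f p * Ki$$(p,q) * g j q))"
    by (rule sum.swap)
  also have "\<dots> = (\<Sum>j\<in>J. c j * Bf Ki n f (g j))"
    by (simp add: Bf_def sum_distrib_left)
  finally show ?thesis .
qed


lemma Bf_shift_left:
  assumes KKi: "\<And>r q. r < n \<Longrightarrow> q < n \<Longrightarrow> (\<Sum>p<n. real_of_int (K$$(r,p)) * Ki$$(p,q)) = (if r = q then 1 else 0)"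
    and Ksym: "\<And>p r. p < n \<Longrightarrow> r < n \<Longrightarrow> K$$(p,r) = K$$(r,p)"
  shows "Bf Ki n (\<lambda>p. \<Sum>r<n. real_of_int (K$$(p,r)) * z r) g = (\<Sum>r<n. z r * g r)"
proof -
  have "Bf Ki n (\<lambda>p. \<Sum>r<n. real_of_int (K$$(p,r)) * z r) g =
     (\<Sum>p<n. \<Sum>q<n. \<Sum>r<n. z r * (real_of_int (K$$(r,p)) * Ki$$(p,q)) * g q)"
    unfolding Bf_def sum_distrib_right
    by (intro sum.cong refl) (simp add: Ksym mult_ac)
  also have "\<dots> = (\<Sum>q<n. \<Sum>p<n. \<Sum>r<n. z r * (real_of_int (K$$(r,p)) * Ki$$(p,q)) * g q)"
    by (rule sum.swap)
  also have "\<dots> = (\<Sum>q<n. \<Sum>r<n. \<Sum>p<n. z r * (real_of_int (K$$(r,p)) * Ki$$(p,q)) * g q)"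
    by (rule sum.cong[OF refl], rule sum.swap)
  also have "\<dots> = (\<Sum>q<n. \<Sum>r<n. z r * (\<Sum>p<n. real_of_int (K$$(r,p)) * Ki$$(p,q)) * g q)"
    by (simp add: sum_distrib_left sum_distrib_right)
  also have "\<dots> = (\<Sum>q<n. \<Sum>r<n. (if r = q then z r * g q else 0))"
    by (intro sum.cong refl) (simp add: KKi)
  also have "\<dots> = (\<Sum>r<n. z r * g r)"
    by (simp add: sum.delta')
  finally show ?thesis .
qed

lemma Bf_shift_right:
  assumes KiK: "\<And>p r. p < n \<Longrightarrow> r < n \<Longrightarrow> (\<Sum>q<n. Ki$$(p,q) * real_of_int (K$$(q,r))) = (if p = r then 1 else 0)"
  shows "Bf Ki n f (\<lambda>q. \<Sum>r<n. real_of_int (K$$(q,r)) * z r) = (\<Sum>p<n. f p * z p)"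
proof -
  have "Bf Ki n f (\<lambda>q. \<Sum>r<n. real_of_int (K$$(q,r)) * z r) =
     (\<Sum>p<n. \<Sum>q<n. \<Sum>r<n. f p * (Ki$$(p,q) * real_of_int (K$$(q,r))) * z r)"
    unfolding Bf_def sum_distrib_left
    by (intro sum.cong refl) (simp add: mult_ac)
  also have "\<dots> = (\<Sum>p<n. \<Sum>r<n. \<Sum>q<n. f p * (Ki$$(p,q) * real_of_int (K$$(q,r))) * z r)"
    by (rule sum.cong[OF refl], rule sum.swap)
  also have "\<dots> = (\<Sum>p<n. \<Sum>r<n. f p * (\<Sum>q<n. Ki$$(p,q) * real_of_int (K$$(q,r))) * z r)"
    by (simp add: sum_distrib_left sum_distrib_right)
  also have "\<dots> = (\<Sum>p<n. \<Sum>r<n. (if p = r then f p * z r else 0))"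
    by (intro sum.cong refl) (simp add: KiK)
  also have "\<dots> = (\<Sum>p<n. f p * z p)"
    by (simp add: sum.delta)
  finally show ?thesis .
qed


lemma Bf_cong: "(\<And>p. p < n \<Longrightarrow> f p = f' p) \<Longrightarrow> (\<And>p. p < n \<Longrightarrow> g p = g' p) \<Longrightarrow>
  Bf Ki n f g = Bf Ki n f' g'"
  unfolding Bf_def by (intro sum.cong refl) auto

definition Fq :: "(nat \<Rightarrow> nat \<Rightarrow> int) \<Rightarrow> nat \<Rightarrow> real mat \<Rightarrow> nat \<Rightarrow> (nat \<Rightarrow> int vec) \<Rightarrow> real" where
  "Fq l k Ki n x = (\<Sum>i<k. \<Sum>j<k. real_of_int (l i j) *
      Bf Ki n (\<lambda>p. real_of_int (x i $ p)) (\<lambda>q. real_of_int (x j $ q)))"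

lemma Fq_class:
  fixes K :: "int mat" and z :: "nat \<Rightarrow> nat \<Rightarrow> int"
  assumes KKi: "\<And>r q. r < n \<Longrightarrow> q < n \<Longrightarrow> (\<Sum>p<n. real_of_int (K$$(r,p)) * Ki$$(p,q)) = (if r = q then 1 else 0)"
    and KiK: "\<And>p r. p < n \<Longrightarrow> r < n \<Longrightarrow> (\<Sum>q<n. Ki$$(p,q) * real_of_int (K$$(q,r))) = (if p = r then 1 else 0)"
    and Ksym: "\<And>p r. p < n \<Longrightarrow> r < n \<Longrightarrow> K$$(p,r) = K$$(r,p)"
    and Keven: "\<And>p. p < n \<Longrightarrow> even (K$$(p,p))"
    and lsym: "\<And>i j. i < k \<Longrightarrow> j < k \<Longrightarrow> l i j = l j i"
    and rel: "\<And>i p. i < k \<Longrightarrow> p < n \<Longrightarrow> x i $ p - y i $ p = (\<Sum>r<n. K$$(p,r) * z i r)"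
  shows "\<exists>e. Fq l k Ki n x = Fq l k Ki n y + real_of_int (2 * e)"
proof -
  define a where "a i j = (\<Sum>r<n. z i r * y j $ r)" for i j
  define c where "c i j = (\<Sum>r<n. \<Sum>s<n. z i r * K$$(r,s) * z j s)" for i j
  define w where "w i = (\<lambda>p. \<Sum>r<n. real_of_int (K$$(p,r)) * real_of_int (z i r))" for i
  have xw: "real_of_int (x i $ p) = real_of_int (y i $ p) + w i p" if "i < k" "p < n" for i p
  proof -
    have "x i $ p = y i $ p + (\<Sum>r<n. K$$(p,r) * z i r)" using rel[OF that] by simp
    then show ?thesis unfolding w_def by simp
  qed
  have B: "Bf Ki n (\<lambda>p. real_of_int (x i $ p)) (\<lambda>q. real_of_int (x j $ q)) =
     Bf Ki n (\<lambda>p. real_of_int (y i $ p)) (\<lambda>q. real_of_int (y j $ q)) + real_of_int (a i j + a j i + c i j)"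
    if "i < k" "j < k" for i j
  proof -
    have 1: "Bf Ki n (w i) (\<lambda>q. real_of_int (y j $ q)) = real_of_int (a i j)"
      unfolding w_def a_def by (subst Bf_shift_left[OF KKi Ksym]) auto
    have 2: "Bf Ki n (\<lambda>q. real_of_int (y i $ q)) (w j) = real_of_int (a j i)"
      unfolding w_def a_def by (subst Bf_shift_right[OF KiK]) (auto simp: mult.commute)
    have 3: "Bf Ki n (w i) (w j) = real_of_int (c i j)"
      unfolding w_def c_def
      by (subst Bf_shift_left[OF KKi Ksym]) (auto simp: sum_distrib_left mult_ac)
    have "Bf Ki n (\<lambda>p. real_of_int (x i $ p)) (\<lambda>q. real_of_int (x j $ q)) =
       Bf Ki n (\<lambda>p. real_of_int (y i $ p) + w i p) (\<lambda>q. real_of_int (y j $ q) + w j q)"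
      by (rule Bf_cong) (auto simp: xw that)
    then show ?thesis
      unfolding Bf_add_left Bf_add_right 1 2 3 by simp
  qed
  have F: "Fq l k Ki n x = Fq l k Ki n y + real_of_int (\<Sum>i<k. \<Sum>j<k. l i j * (a i j + a j i + c i j))"
    unfolding Fq_def by (simp add: B distrib_left sum.distrib)
  have sa: "(\<Sum>i<k. \<Sum>j<k. l i j * a j i) = (\<Sum>i<k. \<Sum>j<k. l i j * a i j)"
  proof -
    have "(\<Sum>i<k. \<Sum>j<k. l i j * a j i) = (\<Sum>j<k. \<Sum>i<k. l i j * a j i)" by (rule sum.swap)
    also have "\<dots> = (\<Sum>j<k. \<Sum>i<k. l j i * a j i)" by (intro sum.cong refl) (simp add: lsym)
    finally show ?thesis .
  qed
  have csym: "c i j = c j i" for i j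
  proof -
    have "c i j = (\<Sum>s<n. \<Sum>r<n. z i r * K$$(r,s) * z j s)" unfolding c_def by (rule sum.swap)
    also have "\<dots> = c j i" unfolding c_def by (intro sum.cong refl) (simp add: Ksym mult_ac)
    finally show ?thesis .
  qed
  have ceven: "even (c i i)" for i
    unfolding c_def by (rule even_sym_sum) (auto simp: Ksym Keven mult_ac)
  have "even (\<Sum>i<k. \<Sum>j<k. l i j * c i j)"
    by (rule even_sym_sum) (auto simp: lsym csym ceven)
  then obtain e' where e': "(\<Sum>i<k. \<Sum>j<k. l i j * c i j) = 2 * e'" by blast
  have "(\<Sum>i<k. \<Sum>j<k. l i j * (a i j + a j i + c i j)) =
     (\<Sum>i<k. \<Sum>j<k. l i j * a i j) + (\<Sum>i<k. \<Sum>j<k. l i j * a j i) + (\<Sum>i<k. \<Sum>j<k. l i j * c i j)"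
    by (simp add: distrib_left sum.distrib)
  also have "\<dots> = 2 * ((\<Sum>i<k. \<Sum>j<k. l i j * a i j) + e')" unfolding sa e' by simp
  finally have S: "(\<Sum>i<k. \<Sum>j<k. l i j * (a i j + a j i + c i j)) = 2 * ((\<Sum>i<k. \<Sum>j<k. l i j * a i j) + e')" .
  show ?thesis
    by (rule exI[of _ "(\<Sum>i<k. \<Sum>j<k. l i j * a i j) + e'"]) (simp only: F S)
qed

lemma cis_shift_even: "cis (pi * (A + real_of_int (2 * e))) = cis (pi * A)"
proof -
  have "cis (pi * (A + real_of_int (2 * e))) = cis (pi * A) * cis (2 * pi * real_of_int e)"
    by (simp add: cis_mult algebra_simps)
  then show ?thesis by simp
qed


lemma PiE_split_bij:
  fixes r m :: nat
  assumes "r \<le> m"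
  shows "bij_betw (\<lambda>a. (restrict a {..<r}, restrict a {r..<m}))
     (PiE {..<m} (\<lambda>_. A)) (PiE {..<r} (\<lambda>_. A) \<times> PiE {r..<m} (\<lambda>_. A))"
proof (rule bij_betw_byWitness[where f'="\<lambda>(b,c) i. if i < r then b i else c i"])
  show "\<forall>a\<in>PiE {..<m} (\<lambda>_. A). (\<lambda>(b,c) i. if i < r then b i else c i) (restrict a {..<r}, restrict a {r..<m}) = a"
  proof (intro ballI ext)
    fix a i assume a: "a \<in> PiE {..<m} (\<lambda>_. A)"
    show "(\<lambda>(b,c) i. if i < r then b i else c i) (restrict a {..<r}, restrict a {r..<m}) i = a i"
      using assms a by (cases "i < r"; cases "i < m") (auto simp: PiE_iff extensional_def)
  qed
  show "\<forall>bc\<in>PiE {..<r} (\<lambda>_. A) \<times> PiE {r..<m} (\<lambda>_. A).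
     (\<lambda>a. (restrict a {..<r}, restrict a {r..<m})) ((\<lambda>(b,c) i. if i < r then b i else c i) bc) = bc"
  proof
    fix bc assume "bc \<in> PiE {..<r} (\<lambda>_. A) \<times> PiE {r..<m} (\<lambda>_. A)"
    then obtain b c where bc: "bc = (b,c)" and b: "b \<in> PiE {..<r} (\<lambda>_. A)" and c: "c \<in> PiE {r..<m} (\<lambda>_. A)"
      by blast
    have 1: "restrict (\<lambda>i. if i < r then b i else c i) {..<r} = b"
    proof
      fix i show "restrict (\<lambda>i. if i < r then b i else c i) {..<r} i = b i"
        using b by (cases "i < r") (auto simp: PiE_iff extensional_def)
    qed
    have 2: "restrict (\<lambda>i. if i < r then b i else c i) {r..<m} = c"
    proof
      fix i show "restrict (\<lambda>i. if i < r then b i else c i) {r..<m} i = c i"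
        using c by (cases "i \<in> {r..<m}") (auto simp: PiE_iff extensional_def)
    qed
    show "(\<lambda>a. (restrict a {..<r}, restrict a {r..<m})) ((\<lambda>(b,c) i. if i < r then b i else c i) bc) = bc"
      unfolding bc using 1 2 by simp
  qed
  show "(\<lambda>a. (restrict a {..<r}, restrict a {r..<m})) ` PiE {..<m} (\<lambda>_. A) \<subseteq> PiE {..<r} (\<lambda>_. A) \<times> PiE {r..<m} (\<lambda>_. A)"
  proof (rule image_subsetI)
    fix a assume a: "a \<in> PiE {..<m} (\<lambda>_. A)"
    have ai: "a i \<in> A" if "i < m" for i using a that by (simp add: PiE_iff)
    have "restrict a {..<r} \<in> PiE {..<r} (\<lambda>_. A)"
      unfolding restrict_PiE_iff using ai assms by simp
    moreover have "restrict a {r..<m} \<in> PiE {r..<m} (\<lambda>_. A)"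
      unfolding restrict_PiE_iff using ai assms by simp
    ultimately show "(restrict a {..<r}, restrict a {r..<m}) \<in> PiE {..<r} (\<lambda>_. A) \<times> PiE {r..<m} (\<lambda>_. A)"
      by blast
  qed
  show "(\<lambda>(b,c) i. if i < r then b i else c i) ` (PiE {..<r} (\<lambda>_. A) \<times> PiE {r..<m} (\<lambda>_. A)) \<subseteq> PiE {..<m} (\<lambda>_. A)"
  proof (rule image_subsetI)
    fix bc assume "bc \<in> PiE {..<r} (\<lambda>_. A) \<times> PiE {r..<m} (\<lambda>_. A)"
    then obtain b c where bc: "bc = (b,c)" and b: "b \<in> PiE {..<r} (\<lambda>_. A)" and c: "c \<in> PiE {r..<m} (\<lambda>_. A)"
      by blast
    have "(\<lambda>i. if i < r then b i else c i) \<in> PiE {..<m} (\<lambda>_. A)"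
    proof (rule PiE_I)
      fix i assume "i \<in> {..<m}"
      then show "(if i < r then b i else c i) \<in> A" using b c
        by (cases "i < r") (simp_all add: PiE_iff)
    next
      fix i assume "i \<notin> {..<m}"
      then have "\<not> i < r" "i \<notin> {r..<m}" using assms by auto
      then show "(if i < r then b i else c i) = undefined" using c
        by (simp add: PiE_iff extensional_def)
    qed
    then show "(\<lambda>(b,c) i. if i < r then b i else c i) bc \<in> PiE {..<m} (\<lambda>_. A)" unfolding bc by simp
  qed
qed

lemma PiE_split_sum:
  fixes G :: "(nat \<Rightarrow> 'a) \<Rightarrow> complex" and r m :: nat
  assumes "r \<le> m"
  shows "(\<Sum>a\<in>PiE {..<m} (\<lambda>_. A). G (restrict a {..<r})) = of_nat (card A) ^ (m - r) * (\<Sum>b\<in>PiE {..<r} (\<lambda>_. A). G b)"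
proof -
  have "(\<Sum>a\<in>PiE {..<m} (\<lambda>_. A). G (restrict a {..<r})) =
      (\<Sum>a\<in>PiE {..<m} (\<lambda>_. A). (\<lambda>(b,c). G b) (restrict a {..<r}, restrict a {r..<m}))" by simp
  also have "\<dots> = (\<Sum>bc\<in>PiE {..<r} (\<lambda>_. A) \<times> PiE {r..<m} (\<lambda>_. A). (\<lambda>(b,c). G b) bc)"
    by (rule sum.reindex_bij_betw[OF PiE_split_bij[OF assms]])
  also have "\<dots> = (\<Sum>b\<in>PiE {..<r} (\<lambda>_. A). \<Sum>c\<in>PiE {r..<m} (\<lambda>_. A). G b)"
    by (rule sum.cartesian_product[symmetric])
  also have "\<dots> = (\<Sum>b\<in>PiE {..<r} (\<lambda>_. A). of_nat (card (PiE {r..<m} (\<lambda>_. A))) * G b)"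
    by simp
  also have "card (PiE {r..<m} (\<lambda>_. A)) = card A ^ (m - r)"
    by (simp add: card_PiE)
  finally show ?thesis by (simp only: sum_distrib_left of_nat_power)
qed


definition rep :: "'a set \<Rightarrow> 'a" where "rep c = (SOME v. v \<in> c)"

lemma GK_rep:
  assumes K: "K \<in> carrier_mat n n" and c: "c \<in> GK K"
  shows "rep c \<in> c" "rep c \<in> carrier_vec n" "lat_rel K `` {rep c} = c"
proof -
  have eq: "equiv (carrier_vec n) (lat_rel K)" by (rule lat_rel_equiv[OF K])
  from c obtain v where v: "v \<in> carrier_vec n" and cv: "c = lat_rel K `` {v}"
    unfolding GK_def using K by (auto elim!: quotientE)
  have "v \<in> c" using equiv_class_self[OF eq v] cv by simp
  then show r: "rep c \<in> c" unfolding rep_def by (rule someI)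
  then have vr: "(v, rep c) \<in> lat_rel K" using cv by simp
  then show "rep c \<in> carrier_vec n" using lat_rel_iff[OF K] by blast
  show "lat_rel K `` {rep c} = c" using equiv_class_eq[OF eq vr] cv by simp
qed

lemma cls_GK: "K \<in> carrier_mat n n \<Longrightarrow> v \<in> carrier_vec n \<Longrightarrow> lat_rel K `` {v} \<in> GK K"
  unfolding GK_def by (auto intro: quotientI)

lemma rep_cls:
  assumes K: "K \<in> carrier_mat n n" and v: "v \<in> carrier_vec n"
  shows "(rep (lat_rel K `` {v}), v) \<in> lat_rel K"
proof -
  have "rep (lat_rel K `` {v}) \<in> lat_rel K `` {v}" using GK_rep(1)[OF K cls_GK[OF K v]] .
  then have "(v, rep (lat_rel K `` {v})) \<in> lat_rel K" by simp
  moreover have "sym (lat_rel K)" using lat_rel_equiv[OF K] unfolding equiv_def by blast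
  ultimately show ?thesis by (blast dest: symD)
qed

lemma rel_choice:
  assumes K: "K \<in> carrier_mat n n" and rel: "\<And>j. j < m \<Longrightarrow> (x j, y j) \<in> lat_rel K"
  shows "\<exists>Z. \<forall>j. j < m \<longrightarrow> (\<forall>p<n. x j $ p - y j $ p = (\<Sum>r<n. K$$(p,r) * Z j r))"
proof -
  have "\<forall>j. \<exists>z. j < m \<longrightarrow> (\<forall>p<n. x j $ p - y j $ p = (\<Sum>r<n. K$$(p,r) * z r))"
  proof
    fix j
    show "\<exists>z. j < m \<longrightarrow> (\<forall>p<n. x j $ p - y j $ p = (\<Sum>r<n. K$$(p,r) * z r))"
    proof (cases "j < m")
      case True
      then have "(x j, y j) \<in> lat_rel K" by (rule rel)
      then have "\<exists>z. \<forall>p<n. x j $ p - y j $ p = (\<Sum>r<n. K$$(p,r) * z r)"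
        unfolding lat_rel_iff[OF K] by (elim conjE)
      then show ?thesis by blast
    qed simp
  qed
  then show ?thesis by (rule choice)
qed

definition lin :: "int mat \<Rightarrow> nat \<Rightarrow> nat \<Rightarrow> nat \<Rightarrow> (nat \<Rightarrow> int vec) \<Rightarrow> int vec" where
  "lin U m n i x = vec n (\<lambda>p. \<Sum>j<m. U$$(i,j) * x j $ p)"

lemma lin_carrier: "lin U m n i x \<in> carrier_vec n"
  unfolding lin_def by simp

lemma lin_rel:
  assumes K: "K \<in> carrier_mat n n" and rel: "\<And>j. j < m \<Longrightarrow> (x j, y j) \<in> lat_rel K"
  shows "(lin U m n i x, lin U m n i y) \<in> lat_rel K"
proof -
  have "\<exists>Z. \<forall>j. j < m \<longrightarrow> (\<forall>p<n. x j $ p - y j $ p = (\<Sum>r<n. K$$(p,r) * Z j r))"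
    by (rule rel_choice[OF K]) (rule rel)
  then obtain Z where
    Z0: "\<forall>j. j < m \<longrightarrow> (\<forall>p<n. x j $ p - y j $ p = (\<Sum>r<n. K$$(p,r) * Z j r))"
    by (elim exE)
  have Z: "x j $ p - y j $ p = (\<Sum>r<n. K$$(p,r) * Z j r)" if "j < m" "p < n" for j p
    using Z0 that by blast
  have "\<forall>p<n. lin U m n i x $ p - lin U m n i y $ p = (\<Sum>r<n. K$$(p,r) * (\<Sum>j<m. U$$(i,j) * Z j r))"
  proof (intro allI impI)
    fix p assume p: "p < n"
    have "lin U m n i x $ p - lin U m n i y $ p = (\<Sum>j<m. U$$(i,j) * (x j $ p - y j $ p))"
      unfolding lin_def using p by (simp add: sum_subtractf right_diff_distrib)
    also have "\<dots> = (\<Sum>j<m. \<Sum>r<n. U$$(i,j) * (K$$(p,r) * Z j r))"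
      by (intro sum.cong refl) (simp add: Z p sum_distrib_left)
    also have "\<dots> = (\<Sum>r<n. \<Sum>j<m. U$$(i,j) * (K$$(p,r) * Z j r))" by (rule sum.swap)
    also have "\<dots> = (\<Sum>r<n. K$$(p,r) * (\<Sum>j<m. U$$(i,j) * Z j r))"
      by (simp add: sum_distrib_left mult_ac)
    finally show "lin U m n i x $ p - lin U m n i y $ p = (\<Sum>r<n. K$$(p,r) * (\<Sum>j<m. U$$(i,j) * Z j r))" .
  qed
  then have ex: "\<exists>z. \<forall>p<n. lin U m n i x $ p - lin U m n i y $ p = (\<Sum>r<n. K$$(p,r) * z r)"
    by (rule exI[where x="\<lambda>r. \<Sum>j<m. U$$(i,j) * Z j r"])
  show ?thesis unfolding lat_rel_iff[OF K] using lin_carrier ex by (intro conjI)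
qed

lemma lin_comp:
  assumes VU: "\<And>i j. i < m \<Longrightarrow> j < m \<Longrightarrow> (\<Sum>k<m. V$$(i,k) * U$$(k,j)) = (if i = j then 1 else 0)"
    and x: "\<And>j. j < m \<Longrightarrow> x j \<in> carrier_vec n" and i: "i < m"
  shows "lin V m n i (\<lambda>k. lin U m n k x) = x i"
proof (rule eq_vecI)
  show "dim_vec (lin V m n i (\<lambda>k. lin U m n k x)) = dim_vec (x i)" using x[OF i] by (simp add: lin_def)
  fix p assume "p < dim_vec (x i)"
  then have p: "p < n" using x[OF i] by simp
  have "lin V m n i (\<lambda>k. lin U m n k x) $ p = (\<Sum>k<m. V$$(i,k) * (\<Sum>j<m. U$$(k,j) * x j $ p))"
    unfolding lin_def using p by simp
  also have "\<dots> = (\<Sum>k<m. \<Sum>j<m. V$$(i,k) * U$$(k,j) * x j $ p)"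
    by (simp add: sum_distrib_left mult_ac)
  also have "\<dots> = (\<Sum>j<m. \<Sum>k<m. V$$(i,k) * U$$(k,j) * x j $ p)" by (rule sum.swap)
  also have "\<dots> = (\<Sum>j<m. (\<Sum>k<m. V$$(i,k) * U$$(k,j)) * x j $ p)"
    by (simp add: sum_distrib_right)
  also have "\<dots> = (\<Sum>j<m. (if i = j then x j $ p else 0))"
    by (intro sum.cong refl) (simp add: VU i)
  also have "\<dots> = x i $ p" using i by (simp add: sum.delta)
  finally show "lin V m n i (\<lambda>k. lin U m n k x) $ p = x i $ p" .
qed


definition Phi :: "int mat \<Rightarrow> int mat \<Rightarrow> nat \<Rightarrow> (nat \<Rightarrow> int vec set) \<Rightarrow> (nat \<Rightarrow> int vec set)" where
  "Phi K U m a = (\<lambda>i\<in>{..<m}. lat_rel K `` {lin U m (dim_row K) i (\<lambda>j. rep (a j))})"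

lemma Phi_in:
  assumes K: "K \<in> carrier_mat n n"
  shows "Phi K U m a \<in> GKpow K m"
  unfolding Phi_def GKpow_def restrict_PiE_iff
  using K by (auto intro!: cls_GK[OF K] simp: lin_carrier)

lemma GKpow_mem: "a \<in> GKpow K m \<Longrightarrow> i < m \<Longrightarrow> a i \<in> GK K"
  unfolding GKpow_def by (simp add: PiE_iff)

lemma GKpow_undef: "a \<in> GKpow K m \<Longrightarrow> \<not> i < m \<Longrightarrow> a i = undefined"
  unfolding GKpow_def by (simp add: PiE_iff extensional_def)

lemma Phi_inv:
  assumes K: "K \<in> carrier_mat n n"
    and VU: "\<And>i j. i < m \<Longrightarrow> j < m \<Longrightarrow> (\<Sum>k<m. V$$(i,k) * U$$(k,j)) = (if i = j then 1 else 0)"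
    and a: "a \<in> GKpow K m"
  shows "Phi K V m (Phi K U m a) = a"
proof
  fix i
  have dK: "dim_row K = n" using K by simp
  show "Phi K V m (Phi K U m a) i = a i"
  proof (cases "i < m")
    case i: True
    define x where "x k = lin U m n k (\<lambda>j. rep (a j))" for k
    have r1: "(rep (Phi K U m a k), x k) \<in> lat_rel K" if "k < m" for k
      using rep_cls[OF K lin_carrier] that unfolding Phi_def x_def dK by simp
    have r2: "(lin V m n i (\<lambda>k. rep (Phi K U m a k)), lin V m n i x) \<in> lat_rel K"
      by (rule lin_rel[OF K r1])
    have r3: "lin V m n i x = rep (a i)" unfolding x_def
      by (rule lin_comp[OF VU _ i]) (auto intro: GK_rep(2)[OF K GKpow_mem[OF a]])
    have "Phi K V m (Phi K U m a) i = lat_rel K `` {lin V m n i (\<lambda>k. rep (Phi K U m a k))}"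
      unfolding Phi_def dK using i by simp
    also have "\<dots> = lat_rel K `` {rep (a i)}"
      using equiv_class_eq[OF lat_rel_equiv[OF K] r2] r3 by simp
    also have "\<dots> = a i" by (rule GK_rep(3)[OF K GKpow_mem[OF a i]])
    finally show ?thesis .
  next
    case False
    then show ?thesis unfolding Phi_def using GKpow_undef[OF a False] by simp
  qed
qed

lemma Phi_bij:
  assumes K: "K \<in> carrier_mat n n"
    and VU: "\<And>i j. i < m \<Longrightarrow> j < m \<Longrightarrow> (\<Sum>k<m. V$$(i,k) * U$$(k,j)) = (if i = j then 1 else 0)"
    and UV: "\<And>i j. i < m \<Longrightarrow> j < m \<Longrightarrow> (\<Sum>k<m. U$$(i,k) * V$$(k,j)) = (if i = j then 1 else 0)"
  shows "bij_betw (Phi K U m) (GKpow K m) (GKpow K m)"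
  by (rule bij_betw_byWitness[where f'="Phi K V m"])
     (auto simp: Phi_inv[OF K VU] Phi_inv[OF K UV] Phi_in[OF K])

lemma Fq_class_rel:
  fixes K :: "int mat"
  assumes K: "K \<in> carrier_mat n n"
    and KKi: "\<And>r q. r < n \<Longrightarrow> q < n \<Longrightarrow> (\<Sum>p<n. real_of_int (K$$(r,p)) * Ki$$(p,q)) = (if r = q then 1 else 0)"
    and KiK: "\<And>p r. p < n \<Longrightarrow> r < n \<Longrightarrow> (\<Sum>q<n. Ki$$(p,q) * real_of_int (K$$(q,r))) = (if p = r then 1 else 0)"
    and Ksym: "\<And>p r. p < n \<Longrightarrow> r < n \<Longrightarrow> K$$(p,r) = K$$(r,p)"
    and Keven: "\<And>p. p < n \<Longrightarrow> even (K$$(p,p))"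
    and lsym: "\<And>i j. i < k \<Longrightarrow> j < k \<Longrightarrow> l i j = l j i"
    and rel: "\<And>i. i < k \<Longrightarrow> (x i, y i) \<in> lat_rel K"
  shows "cis (pi * Fq l k Ki n x) = cis (pi * Fq l k Ki n y)"
proof -
  have "\<exists>Z. \<forall>j. j < k \<longrightarrow> (\<forall>p<n. x j $ p - y j $ p = (\<Sum>r<n. K$$(p,r) * Z j r))"
    by (rule rel_choice[OF K]) (rule rel)
  then obtain Z where
    Z0: "\<forall>j. j < k \<longrightarrow> (\<forall>p<n. x j $ p - y j $ p = (\<Sum>r<n. K$$(p,r) * Z j r))"
    by (elim exE)
  have Z: "x j $ p - y j $ p = (\<Sum>r<n. K$$(p,r) * Z j r)" if "j < k" "p < n" for j p
    using Z0 that by blast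
  have "\<exists>e. Fq l k Ki n x = Fq l k Ki n y + real_of_int (2 * e)"
    by (rule Fq_class[where K=K and Ki=Ki and n=n and k=k and l=l and x=x and y=y and z=Z];
        (rule KKi KiK Ksym Keven lsym Z; assumption))
  then obtain e where "Fq l k Ki n x = Fq l k Ki n y + real_of_int (2 * e)" by blast
  then show ?thesis using cis_shift_even[of "Fq l k Ki n y" e] by simp
qed


lemma sum4_swap:
  "(\<Sum>i\<in>A. \<Sum>k\<in>B. \<Sum>j\<in>C. \<Sum>h\<in>D. f i k j h) = (\<Sum>j\<in>C. \<Sum>h\<in>D. \<Sum>i\<in>A. \<Sum>k\<in>B. f i k j h)"
proof -
  have "(\<Sum>i\<in>A. \<Sum>k\<in>B. \<Sum>j\<in>C. \<Sum>h\<in>D. f i k j h) = (\<Sum>i\<in>A. \<Sum>j\<in>C. \<Sum>k\<in>B. \<Sum>h\<in>D. f i k j h)"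
    by (rule sum.cong[OF refl], rule sum.swap)
  also have "\<dots> = (\<Sum>j\<in>C. \<Sum>i\<in>A. \<Sum>k\<in>B. \<Sum>h\<in>D. f i k j h)" by (rule sum.swap)
  also have "\<dots> = (\<Sum>j\<in>C. \<Sum>i\<in>A. \<Sum>h\<in>D. \<Sum>k\<in>B. f i k j h)"
    by (rule sum.cong[OF refl], rule sum.cong[OF refl], rule sum.swap)
  also have "\<dots> = (\<Sum>j\<in>C. \<Sum>h\<in>D. \<Sum>i\<in>A. \<Sum>k\<in>B. f i k j h)"
    by (rule sum.cong[OF refl], rule sum.swap)
  finally show ?thesis .
qed

lemma Fq_lin:
  "Fq l m Ki n (\<lambda>i. lin U m n i x) = Fq (\<lambda>j h. \<Sum>i<m. \<Sum>k<m. U$$(i,j) * l i k * U$$(k,h)) m Ki n x"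
proof -
  define X where "X j = (\<lambda>p. real_of_int (x j $ p))" for j
  have B: "Bf Ki n (\<lambda>p. real_of_int (lin U m n i x $ p)) (\<lambda>q. real_of_int (lin U m n k x $ q)) =
     (\<Sum>j<m. \<Sum>h<m. real_of_int (U$$(i,j)) * real_of_int (U$$(k,h)) * Bf Ki n (X j) (X h))" for i k
  proof -
    have "Bf Ki n (\<lambda>p. real_of_int (lin U m n i x $ p)) (\<lambda>q. real_of_int (lin U m n k x $ q)) =
       Bf Ki n (\<lambda>p. \<Sum>j<m. real_of_int (U$$(i,j)) * X j p) (\<lambda>q. \<Sum>h<m. real_of_int (U$$(k,h)) * X h q)"
      by (rule Bf_cong) (simp_all add: lin_def X_def)
    also have "\<dots> = (\<Sum>j<m. \<Sum>h<m. real_of_int (U$$(i,j)) * real_of_int (U$$(k,h)) * Bf Ki n (X j) (X h))"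
      unfolding Bf_sum_left Bf_sum_right by (simp add: sum_distrib_left mult_ac)
    finally show ?thesis .
  qed
  have "Fq l m Ki n (\<lambda>i. lin U m n i x) = (\<Sum>i<m. \<Sum>k<m. \<Sum>j<m. \<Sum>h<m.
      real_of_int (U$$(i,j) * l i k * U$$(k,h)) * Bf Ki n (X j) (X h))"
    unfolding Fq_def B by (simp add: sum_distrib_left mult_ac)
  also have "\<dots> = (\<Sum>j<m. \<Sum>h<m. \<Sum>i<m. \<Sum>k<m.
      real_of_int (U$$(i,j) * l i k * U$$(k,h)) * Bf Ki n (X j) (X h))"
    by (rule sum4_swap)
  also have "\<dots> = Fq (\<lambda>j h. \<Sum>i<m. \<Sum>k<m. U$$(i,j) * l i k * U$$(k,h)) m Ki n x"
    unfolding Fq_def X_def by (simp add: sum_distrib_right)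
  finally show ?thesis .
qed

lemma Fq_block:
  assumes r: "r \<le> m" and D: "\<And>j h. j < m \<Longrightarrow> h < m \<Longrightarrow> D j h = (if j < r \<and> h < r then Lr j h else 0)"
  shows "Fq D m Ki n x = Fq Lr r Ki n x"
proof -
  let ?B = "\<lambda>j h. Bf Ki n (\<lambda>p. real_of_int (x j $ p)) (\<lambda>q. real_of_int (x h $ q))"
  have "Fq D m Ki n x = (\<Sum>j<m. \<Sum>h<m. real_of_int (D j h) * ?B j h)" unfolding Fq_def ..
  also have "\<dots> = (\<Sum>j<r. \<Sum>h<m. real_of_int (D j h) * ?B j h)"
    using r by (intro sum.mono_neutral_right) (auto simp: D)
  also have "\<dots> = (\<Sum>j<r. \<Sum>h<r. real_of_int (D j h) * ?B j h)"
    using r by (intro sum.cong refl sum.mono_neutral_right) (auto simp: D)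
  also have "\<dots> = (\<Sum>j<r. \<Sum>h<r. real_of_int (Lr j h) * ?B j h)"
    using r by (intro sum.cong refl) (auto simp: D)
  also have "\<dots> = Fq Lr r Ki n x" unfolding Fq_def ..
  finally show ?thesis .
qed

lemma qform_lift:
  assumes K: "K \<in> carrier_mat n n" and Lm: "Lm \<in> carrier_mat k k" and Ki: "Ki \<in> carrier_mat n n"
  shows "qform (kron (map_mat real_of_int Lm) Ki) (lift K k a) = Fq (\<lambda>i j. Lm$$(i,j)) k Ki n (\<lambda>i. rep (a i))"
proof -
  have "lift K k a = vec (k*n) (\<lambda>t. rep (a (t div n)) $ (t mod n))"
    unfolding lift_def Let_def rep_def using K by simp
  then have "qform (kron (map_mat real_of_int Lm) Ki) (lift K k a) =
     (\<Sum>i<k. \<Sum>j<k. map_mat real_of_int Lm $$ (i,j) * Bf Ki n (\<lambda>p. real_of_int (rep (a i) $ p)) (\<lambda>q. real_of_int (rep (a j) $ q)))"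
    using qform_kron[of "map_mat real_of_int Lm" k Ki n "\<lambda>i. rep (a i)"] Lm Ki by simp
  also have "\<dots> = Fq (\<lambda>i j. Lm$$(i,j)) k Ki n (\<lambda>i. rep (a i))"
    unfolding Fq_def using Lm by (intro sum.cong refl) auto
  finally show ?thesis .
qed


lemma mult_idx:
  assumes "A \<in> carrier_mat a b" "B \<in> carrier_mat b c" "i < a" "j < c"
  shows "(A * B) $$ (i,j) = (\<Sum>k<b. A$$(i,k) * B$$(k,j))"
  using assms by (simp add: scalar_prod_def lessThan_atLeast0)

lemma Fq_restrict: "Fq l r Ki n (\<lambda>i. rep (restrict a {..<r} i)) = Fq l r Ki n (\<lambda>i. rep (a i))"
  unfolding Fq_def by (intro sum.cong refl) auto

theorem lemma4p5:
  fixes K L U Lreg :: "int mat" and n m \<rho> :: nat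
  assumes K_carr: "K \<in> carrier_mat n n"
    and K_sym: "transpose_mat K = K"
    and K_nondeg: "det K \<noteq> 0"
    and K_even: "even_mat K"
    and L_carr: "L \<in> carrier_mat m m"
    and L_sym: "transpose_mat L = L"
    and rho_le: "\<rho> \<le> m"
    and U_carr: "U \<in> carrier_mat m m"
    and U_unimod: "det U = 1 \<or> det U = -1"
    and Lreg_carr: "Lreg \<in> carrier_mat \<rho> \<rho>"
    and Lreg_nondeg: "det Lreg \<noteq> 0"
    and diag: "transpose_mat U * L * U =
       four_block_mat Lreg (0\<^sub>m \<rho> (m - \<rho>)) (0\<^sub>m (m - \<rho>) \<rho>) (0\<^sub>m (m - \<rho>) (m - \<rho>))"
  shows "(\<Sum>a \<in> GKpow K m. cis (2 * pi * QLK L K a)) =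
    of_nat (card (GK K)) ^ (m - \<rho>) *
    (\<Sum>y \<in> GKpow K \<rho>. cis (pi * qform (kron (map_mat real_of_int Lreg) (inv_real K)) (lift K \<rho> y)))"
proof -
  define Kr where "Kr = map_mat real_of_int K"
  define Ki where "Ki = inv_real K"
  have Kr: "Kr \<in> carrier_mat n n" using K_carr unfolding Kr_def by simp
  have detKr: "det Kr \<noteq> 0" using K_nondeg unfolding Kr_def by simp
  have unit: "Kr \<in> Units (ring_mat TYPE(real) n (undefined::unit))"
    by (rule det_non_zero_imp_unit[OF Kr detKr])
  have "mat_inverse Kr \<noteq> None"
    using mat_inverse(1)[OF Kr, where b="undefined::unit"] unit by blast
  then obtain B where B: "mat_inverse Kr = Some B" by blast
  have inv: "Kr * B = 1\<^sub>m n" "B * Kr = 1\<^sub>m n" "B \<in> carrier_mat n n"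
    using mat_inverse(2)[OF Kr B] by auto
  have KiB: "Ki = B" unfolding Ki_def inv_real_def Kr_def[symmetric] B by simp
  have Ki: "Ki \<in> carrier_mat n n" using inv KiB by simp
  have KKi: "(\<Sum>p<n. real_of_int (K$$(r,p)) * Ki$$(p,q)) = (if r = q then 1 else 0)" if "r < n" "q < n" for r q
  proof -
    have "(Kr * Ki) $$ (r,q) = (\<Sum>p<n. Kr$$(r,p) * Ki$$(p,q))" by (rule mult_idx[OF Kr Ki that])
    moreover have "(Kr * Ki) $$ (r,q) = (if r = q then 1 else 0)" using inv KiB that by simp
    moreover have "(\<Sum>p<n. Kr$$(r,p) * Ki$$(p,q)) = (\<Sum>p<n. real_of_int (K$$(r,p)) * Ki$$(p,q))"
      using K_carr that unfolding Kr_def by (intro sum.cong refl) auto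
    ultimately show ?thesis by simp
  qed
  have KiK: "(\<Sum>q<n. Ki$$(p,q) * real_of_int (K$$(q,r))) = (if p = r then 1 else 0)" if "p < n" "r < n" for p r
  proof -
    have "(Ki * Kr) $$ (p,r) = (\<Sum>q<n. Ki$$(p,q) * Kr$$(q,r))" by (rule mult_idx[OF Ki Kr that])
    moreover have "(Ki * Kr) $$ (p,r) = (if p = r then 1 else 0)" using inv KiB that by simp
    moreover have "(\<Sum>q<n. Ki$$(p,q) * Kr$$(q,r)) = (\<Sum>q<n. Ki$$(p,q) * real_of_int (K$$(q,r)))"
      using K_carr that unfolding Kr_def by (intro sum.cong refl) auto
    ultimately show ?thesis by simp
  qed
  have Ksym: "K$$(p,r) = K$$(r,p)" if "p < n" "r < n" for p r
  proof -
    have "transpose_mat K $$ (p,r) = K $$ (r,p)" using K_carr that by simp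
    then show ?thesis using K_sym by simp
  qed
  have Keven: "even (K$$(p,p))" if "p < n" for p
    using K_even K_carr that unfolding even_mat_def by simp
  have Lsym: "L$$(i,j) = L$$(j,i)" if "i < m" "j < m" for i j
  proof -
    have "transpose_mat L $$ (i,j) = L $$ (j,i)" using L_carr that by simp
    then show ?thesis using L_sym by simp
  qed
  define V where "V = det U \<cdot>\<^sub>m adj_mat U"
  have dd: "det U * det U = 1" using U_unimod by auto
  have adj: "adj_mat U \<in> carrier_mat m m" "U * adj_mat U = det U \<cdot>\<^sub>m 1\<^sub>m m" "adj_mat U * U = det U \<cdot>\<^sub>m 1\<^sub>m m"
    using adj_mat[OF U_carr] by auto
  have V: "V \<in> carrier_mat m m" unfolding V_def using adj by simp
  have VU: "(\<Sum>k<m. V$$(i,k) * U$$(k,j)) = (if i = j then 1 else 0)" if "i < m" "j < m" for i j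
  proof -
    have "(adj_mat U * U) $$ (i,j) = (\<Sum>k<m. adj_mat U $$ (i,k) * U$$(k,j))" by (rule mult_idx[OF adj(1) U_carr that])
    then have e: "(\<Sum>k<m. adj_mat U $$ (i,k) * U$$(k,j)) = det U * (if i = j then 1 else 0)"
      using adj(3) that by simp
    have "(\<Sum>k<m. V$$(i,k) * U$$(k,j)) = det U * (\<Sum>k<m. adj_mat U $$ (i,k) * U$$(k,j))"
      unfolding V_def sum_distrib_left using adj(1) that by (intro sum.cong refl) auto
    also have "\<dots> = (if i = j then 1 else 0)" unfolding e using dd by simp
    finally show ?thesis .
  qed
  have UV: "(\<Sum>k<m. U$$(i,k) * V$$(k,j)) = (if i = j then 1 else 0)" if "i < m" "j < m" for i j
  proof -
    have "(U * adj_mat U) $$ (i,j) = (\<Sum>k<m. U $$ (i,k) * adj_mat U$$(k,j))" by (rule mult_idx[OF U_carr adj(1) that])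
    then have e: "(\<Sum>k<m. U $$ (i,k) * adj_mat U$$(k,j)) = det U * (if i = j then 1 else 0)"
      using adj(2) that by simp
    have "(\<Sum>k<m. U$$(i,k) * V$$(k,j)) = det U * (\<Sum>k<m. U $$ (i,k) * adj_mat U$$(k,j))"
      unfolding V_def sum_distrib_left using adj(1) that by (intro sum.cong refl) auto
    also have "\<dots> = (if i = j then 1 else 0)" unfolding e using dd by simp
    finally show ?thesis .
  qed
  have Dent: "(\<Sum>i<m. \<Sum>k<m. U$$(i,j) * L$$(i,k) * U$$(k,h)) =
      (if j < \<rho> \<and> h < \<rho> then Lreg$$(j,h) else 0)" if jm: "j < m" and hm: "h < m" for j h
  proof -
    have tU: "transpose_mat U \<in> carrier_mat m m" using U_carr by simp
    have tUL: "transpose_mat U * L \<in> carrier_mat m m" using U_carr L_carr by simp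
    have tUL_idx: "(transpose_mat U * L) $$ (j,k) = (\<Sum>i<m. U$$(i,j) * L$$(i,k))" if km: "k < m" for k
    proof -
      have "(transpose_mat U * L) $$ (j,k) = (\<Sum>i<m. transpose_mat U $$ (j,i) * L$$(i,k))"
        by (rule mult_idx[OF tU L_carr jm km])
      also have "\<dots> = (\<Sum>i<m. U$$(i,j) * L$$(i,k))" using U_carr jm by (intro sum.cong refl) auto
      finally show ?thesis .
    qed
    have "(transpose_mat U * L * U) $$ (j,h) = (\<Sum>k<m. (transpose_mat U * L) $$ (j,k) * U$$(k,h))"
      by (rule mult_idx[OF tUL U_carr that])
    also have "\<dots> = (\<Sum>k<m. (\<Sum>i<m. U$$(i,j) * L$$(i,k)) * U$$(k,h))"
      using tUL_idx by (intro sum.cong refl) simp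
    also have "\<dots> = (\<Sum>k<m. \<Sum>i<m. U$$(i,j) * L$$(i,k) * U$$(k,h))"
      by (simp add: sum_distrib_right)
    also have "\<dots> = (\<Sum>i<m. \<Sum>k<m. U$$(i,j) * L$$(i,k) * U$$(k,h))" by (rule sum.swap)
    finally have "(\<Sum>i<m. \<Sum>k<m. U$$(i,j) * L$$(i,k) * U$$(k,h)) = (transpose_mat U * L * U) $$ (j,h)" ..
    also have "\<dots> = (if j < \<rho> \<and> h < \<rho> then Lreg$$(j,h) else 0)"
      unfolding diag using that rho_le Lreg_carr by auto
    finally show ?thesis .
  qed
  define G where "G b = cis (pi * Fq (\<lambda>i j. Lreg$$(i,j)) \<rho> Ki n (\<lambda>i. rep (b i)))" for b
  define H where "H b = cis (pi * Fq (\<lambda>i j. L$$(i,j)) m Ki n (\<lambda>i. rep (b i)))" for b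
  have dL: "dim_row L = m" using L_carr by simp
  have step1: "cis (2 * pi * QLK L K a) = H a" for a
  proof -
    have ql: "qform (kron (map_mat real_of_int L) (inv_real K)) (lift K m a) =
       Fq (\<lambda>i j. L$$(i,j)) m (inv_real K) n (\<lambda>i. rep (a i))"
      using qform_lift[OF K_carr L_carr Ki] unfolding Ki_def .
    show ?thesis unfolding QLK_def H_def dL ql Ki_def by simp
  qed
  have step2: "H (Phi K U m a) = G (restrict a {..<\<rho>})" if a: "a \<in> GKpow K m" for a
  proof -
    have rel: "(rep (Phi K U m a i), lin U m n i (\<lambda>j. rep (a j))) \<in> lat_rel K" if "i < m" for i
      using rep_cls[OF K_carr lin_carrier] that K_carr unfolding Phi_def by simp
    have "H (Phi K U m a) = cis (pi * Fq (\<lambda>i j. L$$(i,j)) m Ki n (\<lambda>i. lin U m n i (\<lambda>j. rep (a j))))"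
      unfolding H_def
      by (rule Fq_class_rel[OF K_carr]; (rule KKi KiK Ksym Keven Lsym rel; assumption))
    also have "\<dots> = cis (pi * Fq (\<lambda>j h. \<Sum>i<m. \<Sum>k<m. U$$(i,j) * L$$(i,k) * U$$(k,h)) m Ki n (\<lambda>i. rep (a i)))"
      unfolding Fq_lin ..
    also have "\<dots> = cis (pi * Fq (\<lambda>i j. Lreg$$(i,j)) \<rho> Ki n (\<lambda>i. rep (a i)))"
      using Fq_block[OF rho_le, of "\<lambda>j h. \<Sum>i<m. \<Sum>k<m. U$$(i,j) * L$$(i,k) * U$$(k,h)" "\<lambda>i j. Lreg$$(i,j)"] Dent
      by simp
    also have "\<dots> = G (restrict a {..<\<rho>})" unfolding G_def Fq_restrict ..
    finally show ?thesis .
  qed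
  have "(\<Sum>a \<in> GKpow K m. cis (2 * pi * QLK L K a)) = (\<Sum>a \<in> GKpow K m. H a)"
    unfolding step1 ..
  also have "\<dots> = (\<Sum>a \<in> GKpow K m. H (Phi K U m a))"
    by (rule sum.reindex_bij_betw[OF Phi_bij[OF K_carr VU UV], symmetric])
  also have "\<dots> = (\<Sum>a \<in> GKpow K m. G (restrict a {..<\<rho>}))"
    by (intro sum.cong refl step2)
  also have "\<dots> = of_nat (card (GK K)) ^ (m - \<rho>) * (\<Sum>b \<in> GKpow K \<rho>. G b)"
    unfolding GKpow_def by (rule PiE_split_sum[OF rho_le])
  also have "(\<Sum>b \<in> GKpow K \<rho>. G b) =
    (\<Sum>y \<in> GKpow K \<rho>. cis (pi * qform (kron (map_mat real_of_int Lreg) (inv_real K)) (lift K \<rho> y)))"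
  proof -
    have ql: "qform (kron (map_mat real_of_int Lreg) (inv_real K)) (lift K \<rho> y) =
       Fq (\<lambda>i j. Lreg$$(i,j)) \<rho> (inv_real K) n (\<lambda>i. rep (y i))" for y
      using qform_lift[OF K_carr Lreg_carr Ki] unfolding Ki_def .
    show ?thesis unfolding G_def ql Ki_def ..
  qed
  finally show ?thesis .
qed

end
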